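(* Let $f:\mathbb{R}^d\to\mathbb{R}$ be twice differentiable and suppose there is $M>0$ with $\|\nabla^2 f(x)-\nabla^2 f(y)\|_{\mathrm{op}}\le M\|x-y\|$ for all $x,y$. Let $(x_k)_{k\in\mathbb{N}}$ be generated by the inner iteration described in the context. Then for all $k\ge1$, $$f(x_k)-f(x_0)\le\frac{\delta^2k}{2\sigma}-\frac38\frac{\|(k+1)\bar g_k\|^{4/3}}{\sigma^{1/3}}-\frac{\sigma}{8k^2}S_k^2+\frac{M}{12}S_k^{3/2}+\frac{1}{2\sigma}\sum_{i=0}^{k-1}\frac{\|r_i\|^2}{\|s_i\|^2},$$ where $\frac{\|r_i\|^2}{\|s_i\|^2}$ is set to $0$ if $s_i=0$.
   Context: Inner iteration (parameters $\sigma,\delta>0$, $\theta\in(0,1)$): given $x_0\in\mathbb{R}^d$ and a real symmetric matrix $B_0$, for $k=0,1,\dots$: let $m_k(s):=\langle \nabla f(x_k)+\frac{1}{k+1}\sum_{i=0}^k(2i+1)\nabla f(x_i),s\rangle+\frac12\langle B_ks,s\rangle+\frac{\sigma}{4}\|s\|^4$; choose any $s_k$ with $\|\nabla m_k(s_k)\|\le\delta\|s_k\|$; set $x_{k+1}=x_k+s_k$, $r_k=\nabla f(x_{k+1})-\nabla f(x_k)-B_ks_k$, and $B_{k+1}=\frac{1-\theta}{1+\theta}\big(B_k+\frac{r_ks_k^\top+s_kr_k^\top}{\|s_k\|^2}-\frac{\langle r_k,s_k\rangle}{\|s_k\|^4}s_ks_k^\top\big)$. Definitions for $k\ge1$: $\bar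 g_k:=\frac{1}{k(k+1)}\big(\sum_{i=0}^{k-1}(2i+1)\nabla f(x_i)+k\nabla f(x_k)\big)$ and $S_k:=\sum_{i=0}^{k-1}\|s_i\|^2$. *)

theory Defs
  imports "HOL-Analysis.Analysis"
begin

definition model_lin :: "('a::euclidean_space \<Rightarrow> 'a) \<Rightarrow> (nat \<Rightarrow> 'a) \<Rightarrow> nat \<Rightarrow> 'a" where
  "model_lin gf x k = gf (x k) + (1 / real (k + 1)) *\<^sub>R (\<Sum>i\<le>k. real (2 * i + 1) *\<^sub>R gf (x i))"

definition model :: "real \<Rightarrow> ('a::euclidean_space \<Rightarrow> 'a) \<Rightarrow> (nat \<Rightarrow> 'a) \<Rightarrow> (nat \<Rightarrow> 'a \<Rightarrow> 'a) \<Rightarrow> nat \<Rightarrow> 'a \<Rightarrow> real" where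
  "model \<sigma> gf x B k s = model_lin gf x k \<bullet> s + 1/2 * (B k s \<bullet> s) + \<sigma> / 4 * norm s ^ 4"

definition resid :: "('a::euclidean_space \<Rightarrow> 'a) \<Rightarrow> (nat \<Rightarrow> 'a) \<Rightarrow> (nat \<Rightarrow> 'a \<Rightarrow> 'a) \<Rightarrow> (nat \<Rightarrow> 'a) \<Rightarrow> nat \<Rightarrow> 'a" where
  "resid gf x B s k = gf (x (Suc k)) - gf (x k) - B k (s k)"

definition gbar :: "('a::euclidean_space \<Rightarrow> 'a) \<Rightarrow> (nat \<Rightarrow> 'a) \<Rightarrow> nat \<Rightarrow> 'a" where
  "gbar gf x k = (1 / (real k * real (k + 1))) *\<^sub>R
      ((\<Sum>i<k. real (2 * i + 1) *\<^sub>R gf (x i)) + real k *\<^sub>R gf (x k))"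

definition Ssum :: "(nat \<Rightarrow> 'a::euclidean_space) \<Rightarrow> nat \<Rightarrow> real" where
  "Ssum s k = (\<Sum>i<k. norm (s i) ^ 2)"

end

theory Submission
  imports Defs
begin

lemma pow_third: "0 \<le> (X::real) \<Longrightarrow> n \<noteq> 0 \<Longrightarrow> (X powr (1/3)) ^ n = X powr (real n / 3)"
proof -
  assume "0 \<le> X" "n \<noteq> 0"
  have "(X powr (1/3)) ^ n = (X powr (1/3)) powr (real n)"
    using \<open>n \<noteq> 0\<close> by (simp add: powr_realpow')
  also have "\<dots> = X powr (real n / 3)" by (simp add: powr_powr)
  finally show ?thesis .
qed

lemma cube_root_pow: "0 \<le> (X::real) \<Longrightarrow> (X powr (1/3)) ^ 3 = X"
  using pow_third[of X 3] by (cases "X = 0") auto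

lemma pow43: "0 \<le> (X::real) \<Longrightarrow> X powr (4/3) = (X powr (1/3)) ^ 4"
  using pow_third[of X 4] by simp

lemma amgm1:
  assumes X: "0 \<le> (X::real)" and s: "0 < \<sigma>" and t: "0 < t"
  shows "3/8 * X powr (4/3) / \<sigma> powr (1/3) \<le> X^2 / (4*\<sigma>*t^2) + \<sigma>*t^4/8"
proof -
  define y where "y = X powr (1/3)"
  define q where "q = \<sigma> powr (1/3)"
  have y0: "0 \<le> y" unfolding y_def by simp
  have q0: "0 < q" unfolding q_def using s by simp
  have Xy: "X = y^3" unfolding y_def using cube_root_pow X by simp
  have sq: "\<sigma> = q^3" unfolding q_def using cube_root_pow s by simp
  have X4: "X powr (4/3) = y^4" unfolding y_def using pow43 X by simp
  define Z where "Z = y^2"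
  define W where "W = q^2*t^2"
  have Z0: "0 \<le> Z" "0 \<le> W" unfolding Z_def W_def by auto
  have key0: "0 \<le> (Z-W)^2*(2*Z+W)" using Z0 by auto
  have key: "3*Z^2*W \<le> 2*Z^3 + W^3" using key0 by (simp add: power2_eq_square power3_eq_cube algebra_simps)
  have key2: "3 * y^4 * q^2 * t^2 \<le> 2*y^6 + q^6*t^6"
    using key unfolding Z_def W_def by (simp add: power_mult_distrib flip: power_mult)
  have "3/8 * y^4 / q \<le> y^6 / (4*q^3*t^2) + q^3*t^4/8"
  proof -
    have pos: "0 < 8*q^3*t^2" using q0 t by simp
    have "(3/8 * y^4 / q) * (8*q^3*t^2) = 3 * y^4 * q^2 * t^2"
      using q0 by (simp add: field_simps power2_eq_square power3_eq_cube)
    moreover have "(y^6 / (4*q^3*t^2) + q^3*t^4/8) * (8*q^3*t^2) = 2*y^6 + q^6*t^6"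
      using q0 t by (simp add: field_simps power2_eq_square power3_eq_cube)
      (simp add: eval_nat_numeral algebra_simps)
    ultimately show ?thesis using key2 pos by (metis mult_le_cancel_right_pos)
  qed
  moreover have "X^2 = y^6" using Xy by simp
  ultimately show ?thesis unfolding X4 q_def[symmetric] by (simp add: sq)
qed

lemma amgm2:
  assumes X: "0 \<le> (X::real)" and s: "0 < \<sigma>" and t: "0 \<le> t" and a: "0 \<le> a"
  shows "a*X*t/2 \<le> 3/8 * X powr (4/3) / \<sigma> powr (1/3) + a^4*\<sigma>*t^4/8"
proof -
  define y where "y = X powr (1/3)"
  define q where "q = \<sigma> powr (1/3)"
  have y0: "0 \<le> y" unfolding y_def by simp
  have q0: "0 < q" unfolding q_def using s by simp
  have Xy: "X = y^3" unfolding y_def using cube_root_pow X by simp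
  have sq: "\<sigma> = q^3" unfolding q_def using cube_root_pow s by simp
  have X4: "X powr (4/3) = y^4" unfolding y_def using pow43 X by simp
  define P where "P = a*t*q"
  have P0: "0 \<le> P" unfolding P_def using a t q0 by simp
  have key0: "0 \<le> (y-P)^2*(3*y^2+2*y*P+P^2)" using P0 y0 by auto
  have key: "4*y^3*P \<le> 3*y^4 + P^4" using key0 by (simp add: power2_eq_square power3_eq_cube algebra_simps)
      (simp add: eval_nat_numeral algebra_simps)
  have "a*y^3*t/2 \<le> 3/8 * y^4 / q + a^4*q^3*t^4/8"
  proof -
    have pos: "0 < 8*q" using q0 by simp
    have "(a*y^3*t/2) * (8*q) = 4*y^3*P" unfolding P_def by (simp add: field_simps)
    moreover have "(3/8 * y^4 / q + a^4*q^3*t^4/8) * (8*q) = 3*y^4 + P^4"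
      unfolding P_def using q0 by (simp add: field_simps power_mult_distrib) (simp add: eval_nat_numeral algebra_simps)
    ultimately show ?thesis using key pos by (metis mult_le_cancel_right_pos)
  qed
  thus ?thesis unfolding X4 q_def[symmetric] by (simp add: sq Xy)
qed

lemma id1: "0 < (\<sigma>::real) \<Longrightarrow> 0 < (t::real) \<Longrightarrow>
   (w - \<sigma>*t^4)/2 + (U - 2*\<sigma>*t^2*w + \<sigma>^2*t^6)/(4*\<sigma>*t^2) + \<sigma>*t^4/8 = U/(4*\<sigma>*t^2) - \<sigma>*t^4/8"
proof -
  assume a: "0 < \<sigma>" "0 < t"
  have h: "(U - 2*\<sigma>*t^2*w + \<sigma>^2*t^6)/(4*\<sigma>*t^2) = U/(4*\<sigma>*t^2) - w/2 + \<sigma>*t^4/4"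
    using a by (simp add: field_simps power2_eq_square) (simp add: eval_nat_numeral)
  show ?thesis by (simp only: h) (simp add: field_simps)
qed

lemma step_ineq:
  fixes Gn Go s E r :: "'a::real_inner"
  assumes s0: "0 < \<sigma>" and d0: "0 \<le> \<delta>" and a0: "0 \<le> a" and a1: "a \<le> 1"
    and Gn: "Gn = E + r - (\<sigma> * norm s ^ 2) *\<^sub>R s" and E: "norm E \<le> \<delta> * norm s"
    and rz: "s = 0 \<Longrightarrow> r = 0"
  shows "(Gn \<bullet> s)/2 - a*(Go \<bullet> s)/2 + 3/8 * norm Gn powr (4/3) / \<sigma> powr (1/3)
           - 3/8 * norm Go powr (4/3) / \<sigma> powr (1/3)
         \<le> \<delta>^2/(2*\<sigma>) + (if s = 0 then 0 else norm r ^ 2 / norm s ^ 2)/(2*\<sigma>) - \<sigma>*(1-a)*norm s^4/8"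
proof -
  define t where "t = norm s"
  define \<Phi> where "\<Phi> = (\<lambda>G::'a. 3/8 * norm G powr (4/3) / \<sigma> powr (1/3))"
  have t0: "0 \<le> t" unfolding t_def by simp
  have B: "- a*(Go \<bullet> s)/2 - \<Phi> Go \<le> a*\<sigma>*t^4/8"
  proof -
    have "- a*(Go \<bullet> s)/2 \<le> a * norm Go * t / 2"
    proof -
      have "- (Go \<bullet> s) \<le> norm Go * t" using Cauchy_Schwarz_ineq2[of Go s] unfolding t_def by linarith
      then have "a * (- (Go \<bullet> s)) \<le> a * (norm Go * t)" using a0 by (rule mult_left_mono)
      then show ?thesis by simp
    qed
    also have "\<dots> \<le> \<Phi> Go + a^4*\<sigma>*t^4/8" unfolding \<Phi>_def using amgm2[OF _ s0 t0 a0, of "norm Go"] by simp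
    also have "a^4*\<sigma>*t^4/8 \<le> a*\<sigma>*t^4/8"
    proof -
      have "a^3 \<le> 1" using a0 a1 by (rule power_le_one)
      then have "a * a^3 \<le> a * 1" using a0 by (rule mult_left_mono)
      then have "a^4 \<le> a" by (simp add: eval_nat_numeral)
      then show ?thesis using s0 t0 by (simp add: mult_right_mono divide_right_mono)
    qed
    finally show ?thesis by simp
  qed
  have A: "(Gn \<bullet> s)/2 + \<Phi> Gn \<le> \<delta>^2/(2*\<sigma>) + (if s = 0 then 0 else norm r ^ 2 / norm s ^ 2)/(2*\<sigma>) - \<sigma>*norm s^4/8"
  proof (cases "s = 0")
    case True
    then have "r = 0" using rz by simp
    moreover have "E = 0" using E True by simp
    ultimately have "Gn = 0" using Gn True by simp
    then show ?thesis using True s0 unfolding \<Phi>_def by simp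
  next
    case False
    then have tp: "0 < t" unfolding t_def by simp
    define u where "u = E + r"
    have Gn': "Gn = u - (\<sigma>*t^2) *\<^sub>R s" using Gn unfolding u_def t_def by simp
    have ss: "s \<bullet> s = t^2" unfolding t_def by (simp add: power2_norm_eq_inner)
    have n2: "norm Gn ^ 2 = norm u ^ 2 - 2*\<sigma>*t^2*(u \<bullet> s) + \<sigma>^2*t^6"
      unfolding Gn' power2_norm_eq_inner using ss
      by (simp add: inner_diff_left inner_diff_right inner_commute algebra_simps)
         (simp add: eval_nat_numeral algebra_simps)
    have gs: "Gn \<bullet> s = u \<bullet> s - \<sigma>*t^4" unfolding Gn' using ss
      by (simp add: inner_diff_left algebra_simps)
    have am: "\<Phi> Gn \<le> norm Gn ^2/(4*\<sigma>*t^2) + \<sigma>*t^4/8"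
      unfolding \<Phi>_def using amgm1[OF _ s0 tp] by simp
    have "norm u^2 \<le> 2*norm E^2 + 2*norm r^2"
    proof -
      have "norm u^2 + norm (E - r)^2 = 2*norm E^2 + 2*norm r^2"
        unfolding u_def power2_norm_eq_inner
        by (simp add: inner_add_left inner_add_right inner_diff_left inner_diff_right inner_commute)
      then show ?thesis by (smt (verit) zero_le_power2)
    qed
    also have "norm E^2 \<le> \<delta>^2*t^2"
    proof -
      have "norm E^2 \<le> (\<delta>*t)^2" using E unfolding t_def by (rule power_mono) simp
      then show ?thesis by (simp add: power_mult_distrib)
    qed
    finally have u2: "norm u^2 \<le> 2*\<delta>^2*t^2 + 2*norm r^2" by simp
    have "(Gn \<bullet> s)/2 + \<Phi> Gn \<le> (u \<bullet> s - \<sigma>*t^4)/2 + (norm Gn ^ 2/(4*\<sigma>*t^2) + \<sigma>*t^4/8)"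
      by (rule add_mono) (use gs am in simp_all)
    also have "\<dots> = (u \<bullet> s - \<sigma>*t^4)/2 + (norm u ^ 2 - 2*\<sigma>*t^2*(u \<bullet> s) + \<sigma>^2*t^6)/(4*\<sigma>*t^2) + \<sigma>*t^4/8"
      by (simp only: n2 add.assoc)
    also have "\<dots> = norm u^2/(4*\<sigma>*t^2) - \<sigma>*t^4/8"
      using id1[OF s0 tp] by simp
    also have "\<dots> \<le> (2*\<delta>^2*t^2 + 2*norm r^2)/(4*\<sigma>*t^2) - \<sigma>*t^4/8"
      using u2 s0 tp by (simp add: divide_right_mono)
    also have "\<dots> = \<delta>^2/(2*\<sigma>) + norm r^2/t^2/(2*\<sigma>) - \<sigma>*t^4/8"
      using s0 tp by (simp add: field_simps)
    finally show ?thesis using False unfolding t_def by simp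
  qed
  have "(Gn \<bullet> s)/2 - a*(Go \<bullet> s)/2 + \<Phi> Gn - \<Phi> Go
        \<le> \<delta>^2/(2*\<sigma>) + (if s = 0 then 0 else norm r ^ 2 / norm s ^ 2)/(2*\<sigma>) - \<sigma>*norm s^4/8 + a*\<sigma>*t^4/8"
    using A B by simp
  also have "\<dots> = \<delta>^2/(2*\<sigma>) + (if s = 0 then 0 else norm r ^ 2 / norm s ^ 2)/(2*\<sigma>) - \<sigma>*(1-a)*norm s^4/8"
    unfolding t_def by (simp add: field_simps)
  finally show ?thesis unfolding \<Phi>_def .
qed

lemma line_deriv:
  assumes "\<And>y. (F has_derivative D y) (at y)"
  shows "((\<lambda>\<tau>::real. F (p + \<tau> *\<^sub>R h)) has_derivative (\<lambda>d. D (p + \<tau> *\<^sub>R h) (d *\<^sub>R h))) (at \<tau>)"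
proof -
  have "((\<lambda>\<tau>::real. p + \<tau> *\<^sub>R h) has_derivative (\<lambda>d. d *\<^sub>R h)) (at \<tau>)"
    by (auto intro!: derivative_eq_intros)
  from has_derivative_compose[OF this assms] show ?thesis .
qed

lemma hess_bound:
  fixes Hf :: "'a::euclidean_space \<Rightarrow> 'a \<Rightarrow> 'a"
  assumes hess: "\<And>y. (gf has_derivative Hf y) (at y)"
    and lip: "\<And>y z. onorm (\<lambda>v. Hf y v - Hf z v) \<le> M * norm (y - z)"
  shows "\<bar>(Hf p h - Hf q h) \<bullet> h\<bar> \<le> M * norm (p - q) * norm h ^ 2"
proof -
  have bl: "bounded_linear (\<lambda>v. Hf p v - Hf q v)"
    using has_derivative_bounded_linear[OF hess[of p]] has_derivative_bounded_linear[OF hess[of q]]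
    by (rule bounded_linear_sub)
  have "\<bar>(Hf p h - Hf q h) \<bullet> h\<bar> \<le> norm (Hf p h - Hf q h) * norm h" by (rule Cauchy_Schwarz_ineq2)
  also have "norm (Hf p h - Hf q h) \<le> onorm (\<lambda>v. Hf p v - Hf q v) * norm h"
    using onorm[OF bl, of h] by simp
  also have "onorm (\<lambda>v. Hf p v - Hf q v) * norm h \<le> M * norm (p - q) * norm h"
    using lip[of p q] by (simp add: mult_right_mono)
  finally show ?thesis by (simp add: power2_eq_square mult_right_mono mult.assoc)
qed

lemma trapezoid:
  fixes f :: "'a::euclidean_space \<Rightarrow> real"
  assumes grad: "\<And>y. (f has_derivative (\<lambda>h. gf y \<bullet> h)) (at y)"
    and hess: "\<And>y. (gf has_derivative Hf y) (at y)"
    and lip: "\<And>y z. onorm (\<lambda>v. Hf y v - Hf z v) \<le> M * norm (y - z)"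
  shows "f (x + h) - f x \<le> ((gf x + gf (x + h)) \<bullet> h)/2 + M/12 * norm h ^ 3"
proof -
  define m where "m = x + (1/2) *\<^sub>R h"
  define L where "L = M * norm h ^ 3"
  define \<psi> where "\<psi> = (\<lambda>\<tau>::real. f (m + \<tau> *\<^sub>R h) - f (m + (-\<tau>) *\<^sub>R h)
      - \<tau> * ((gf (m + \<tau> *\<^sub>R h) + gf (m + (-\<tau>) *\<^sub>R h)) \<bullet> h) - 2/3 * L * \<tau>^3)"
  have lin: "\<And>p d. Hf p (d *\<^sub>R h) = d *\<^sub>R Hf p h"
    using has_derivative_linear[OF hess] by (simp add: linear_scale)
  have linneg: "\<And>p v. Hf p (- v) = - Hf p v"
    using has_derivative_linear[OF hess] by (simp add: linear_neg)
  have der: "(\<psi> has_real_derivative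
      (- \<tau> * ((Hf (m + \<tau> *\<^sub>R h) h - Hf (m + (-\<tau>) *\<^sub>R h) h) \<bullet> h) - 2 * L * \<tau>^2)) (at \<tau>)" for \<tau>
  proof -
    have f1: "((\<lambda>\<tau>. f (m + \<tau> *\<^sub>R h)) has_derivative (\<lambda>d. gf (m + \<tau> *\<^sub>R h) \<bullet> (d *\<^sub>R h))) (at \<tau>)"
      using line_deriv[of f "\<lambda>y h. gf y \<bullet> h", OF grad] .
    have neg: "((\<lambda>\<tau>::real. - \<tau>) has_derivative (\<lambda>d. - d)) (at \<tau>)" by (auto intro!: derivative_eq_intros)
    have f2: "((\<lambda>\<tau>. f (m + (-\<tau>) *\<^sub>R h)) has_derivative (\<lambda>d. gf (m + (-\<tau>) *\<^sub>R h) \<bullet> ((-d) *\<^sub>R h))) (at \<tau>)"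
      using has_derivative_compose[OF neg line_deriv[of f "\<lambda>y h. gf y \<bullet> h", OF grad, of m h "-\<tau>"]] .
    have g1: "((\<lambda>\<tau>. gf (m + \<tau> *\<^sub>R h)) has_derivative (\<lambda>d. Hf (m + \<tau> *\<^sub>R h) (d *\<^sub>R h))) (at \<tau>)"
      using line_deriv[of gf Hf, OF hess] .
    have g2: "((\<lambda>\<tau>. gf (m + (-\<tau>) *\<^sub>R h)) has_derivative (\<lambda>d. Hf (m + (-\<tau>) *\<^sub>R h) ((-d) *\<^sub>R h))) (at \<tau>)"
      using has_derivative_compose[OF neg line_deriv[of gf Hf, OF hess, of m h "-\<tau>"]] .
    have "(\<psi> has_derivative (\<lambda>d. gf (m + \<tau> *\<^sub>R h) \<bullet> (d *\<^sub>R h) - gf (m + (-\<tau>) *\<^sub>R h) \<bullet> ((-d) *\<^sub>R h)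
        - (\<tau> * ((Hf (m + \<tau> *\<^sub>R h) (d *\<^sub>R h) + Hf (m + (-\<tau>) *\<^sub>R h) ((-d) *\<^sub>R h)) \<bullet> h)
           + d * ((gf (m + \<tau> *\<^sub>R h) + gf (m + (-\<tau>) *\<^sub>R h)) \<bullet> h))
        - 2/3 * L * (3 * \<tau>^2 * d))) (at \<tau>)"
      unfolding \<psi>_def
      by (intro has_derivative_diff has_derivative_mult f1 f2 has_derivative_inner_left has_derivative_add g1 g2
            has_derivative_ident has_derivative_const has_derivative_mult_right)
         (auto intro!: derivative_eq_intros simp: algebra_simps)
    then show ?thesis
      by (rule has_derivative_imp_has_field_derivative) (simp add: lin linneg algebra_simps inner_add_left inner_diff_left)
  qed
  have nonpos: "- \<tau> * ((Hf (m + \<tau> *\<^sub>R h) h - Hf (m + (-\<tau>) *\<^sub>R h) h) \<bullet> h) - 2 * L * \<tau>^2 \<le> 0"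
    if "0 \<le> \<tau>" for \<tau>
  proof -
    have "\<bar>(Hf (m + \<tau> *\<^sub>R h) h - Hf (m + (-\<tau>) *\<^sub>R h) h) \<bullet> h\<bar> \<le> M * norm ((m + \<tau> *\<^sub>R h) - (m + (-\<tau>) *\<^sub>R h)) * norm h ^ 2"
      by (rule hess_bound[OF hess lip])
    also have "norm ((m + \<tau> *\<^sub>R h) - (m + (-\<tau>) *\<^sub>R h)) = 2 * \<tau> * norm h"
    proof -
      have "(m + \<tau> *\<^sub>R h) - (m + (-\<tau>) *\<^sub>R h) = 2 *\<^sub>R (\<tau> *\<^sub>R h)"
        by (simp only: scaleR_2) simp
      then show ?thesis using that by simp
    qed
    finally have "\<bar>(Hf (m + \<tau> *\<^sub>R h) h - Hf (m + (-\<tau>) *\<^sub>R h) h) \<bullet> h\<bar> \<le> 2 * \<tau> * L"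
      unfolding L_def by (simp add: power2_eq_square power3_eq_cube algebra_simps)
    then have "- \<tau> * ((Hf (m + \<tau> *\<^sub>R h) h - Hf (m + (-\<tau>) *\<^sub>R h) h) \<bullet> h) \<le> \<tau> * (2 * \<tau> * L)"
    proof -
      assume hX: "\<bar>(Hf (m + \<tau> *\<^sub>R h) h - Hf (m + (-\<tau>) *\<^sub>R h) h) \<bullet> h\<bar> \<le> 2 * \<tau> * L"
      have "- ((Hf (m + \<tau> *\<^sub>R h) h - Hf (m + (-\<tau>) *\<^sub>R h) h) \<bullet> h) \<le> 2 * \<tau> * L"
        using hX by linarith
      then have "\<tau> * (- ((Hf (m + \<tau> *\<^sub>R h) h - Hf (m + (-\<tau>) *\<^sub>R h) h) \<bullet> h)) \<le> \<tau> * (2 * \<tau> * L)"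
        using that by (rule mult_left_mono)
      then show ?thesis by simp
    qed
    then show ?thesis by (simp add: power2_eq_square algebra_simps)
  qed
  have "\<psi> (1/2) \<le> \<psi> 0"
  proof (rule DERIV_nonpos_imp_nonincreasing[of 0 "1/2" \<psi>])
    fix \<tau> :: real assume "0 \<le> \<tau>" "\<tau> \<le> 1/2"
    show "\<exists>y. (\<psi> has_real_derivative y) (at \<tau>) \<and> y \<le> 0"
      using der[of \<tau>] nonpos[OF \<open>0 \<le> \<tau>\<close>] by blast
  qed simp
  moreover have "m + (1/2) *\<^sub>R h = x + h"
  proof -
    have "m + (1/2) *\<^sub>R h = x + ((1/2) *\<^sub>R h + (1/2) *\<^sub>R h)" unfolding m_def by (simp only: add.assoc)
    also have "(1/2) *\<^sub>R h + (1/2) *\<^sub>R h = ((1/2) + (1/2::real)) *\<^sub>R h" by (simp only: scaleR_add_left)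
    finally show ?thesis by simp
  qed
  moreover have "m + (-(1/2)) *\<^sub>R h = x" unfolding m_def by simp
  moreover have "\<psi> 0 = 0" unfolding \<psi>_def by simp
  ultimately have "f (x + h) - f x - (1/2) * ((gf (x + h) + gf x) \<bullet> h) - 2/3 * L * (1/2)^3 \<le> 0"
    unfolding \<psi>_def by simp
  moreover have "(gf (x + h) + gf x) \<bullet> h = (gf x + gf (x + h)) \<bullet> h" by (simp add: add.commute)
  moreover have "2/3 * L * (1/2)^3 = M/12 * norm h ^ 3" unfolding L_def by (simp add: power3_eq_cube)
  ultimately show ?thesis by linarith
qed

lemma lin_upd:
  fixes Bj :: "'a::real_inner \<Rightarrow> 'a"
  assumes lin: "linear Bj"
  shows "linear (\<lambda>v. \<rho> *\<^sub>R (Bj v + c *\<^sub>R ((s \<bullet> v) *\<^sub>R r + (r \<bullet> v) *\<^sub>R s) - (\<kappa> * (s \<bullet> v)) *\<^sub>R s))"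
proof (rule linearI)
  fix u v
  show "\<rho> *\<^sub>R (Bj (u + v) + c *\<^sub>R ((s \<bullet> (u + v)) *\<^sub>R r + (r \<bullet> (u + v)) *\<^sub>R s) - (\<kappa> * (s \<bullet> (u + v))) *\<^sub>R s) =
    \<rho> *\<^sub>R (Bj u + c *\<^sub>R ((s \<bullet> u) *\<^sub>R r + (r \<bullet> u) *\<^sub>R s) - (\<kappa> * (s \<bullet> u)) *\<^sub>R s) +
    \<rho> *\<^sub>R (Bj v + c *\<^sub>R ((s \<bullet> v) *\<^sub>R r + (r \<bullet> v) *\<^sub>R s) - (\<kappa> * (s \<bullet> v)) *\<^sub>R s)"
    by (simp only: linear_add[OF lin] inner_add_right distrib_left scaleR_add_left scaleR_add_right scaleR_diff_right)
       (simp add: algebra_simps)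
next
  fix a u
  show "\<rho> *\<^sub>R (Bj (a *\<^sub>R u) + c *\<^sub>R ((s \<bullet> (a *\<^sub>R u)) *\<^sub>R r + (r \<bullet> (a *\<^sub>R u)) *\<^sub>R s) - (\<kappa> * (s \<bullet> (a *\<^sub>R u))) *\<^sub>R s) =
    a *\<^sub>R (\<rho> *\<^sub>R (Bj u + c *\<^sub>R ((s \<bullet> u) *\<^sub>R r + (r \<bullet> u) *\<^sub>R s) - (\<kappa> * (s \<bullet> u)) *\<^sub>R s))"
    by (simp add: linear_scale[OF lin] scaleR_add_right scaleR_diff_right)
       (simp add: algebra_simps)
qed

lemma sym_upd:
  fixes Bj :: "'a::real_inner \<Rightarrow> 'a"
  assumes sym: "\<And>u v. Bj u \<bullet> v = u \<bullet> Bj v"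
  shows "(\<rho> *\<^sub>R (Bj u + c *\<^sub>R ((s \<bullet> u) *\<^sub>R r + (r \<bullet> u) *\<^sub>R s) - (\<kappa> * (s \<bullet> u)) *\<^sub>R s)) \<bullet> v
       = u \<bullet> (\<rho> *\<^sub>R (Bj v + c *\<^sub>R ((s \<bullet> v) *\<^sub>R r + (r \<bullet> v) *\<^sub>R s) - (\<kappa> * (s \<bullet> v)) *\<^sub>R s))"
proof -
  have "(\<rho> *\<^sub>R (Bj u + c *\<^sub>R ((s \<bullet> u) *\<^sub>R r + (r \<bullet> u) *\<^sub>R s) - (\<kappa> * (s \<bullet> u)) *\<^sub>R s)) \<bullet> v
     = \<rho> * (u \<bullet> Bj v + c * ((s \<bullet> u) * (r \<bullet> v) + (r \<bullet> u) * (s \<bullet> v)) - \<kappa> * (s \<bullet> u) * (s \<bullet> v))"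
    by (simp add: inner_add_left inner_diff_left sym)
  moreover have "u \<bullet> (\<rho> *\<^sub>R (Bj v + c *\<^sub>R ((s \<bullet> v) *\<^sub>R r + (r \<bullet> v) *\<^sub>R s) - (\<kappa> * (s \<bullet> v)) *\<^sub>R s))
     = \<rho> * (u \<bullet> Bj v + c * ((s \<bullet> v) * (u \<bullet> r) + (r \<bullet> v) * (u \<bullet> s)) - \<kappa> * (s \<bullet> v) * (u \<bullet> s))"
    by (simp add: inner_add_right inner_diff_right)
  ultimately show ?thesis by (simp add: inner_commute algebra_simps)
qed

lemma B_props:
  fixes B :: "nat \<Rightarrow> 'a::euclidean_space \<Rightarrow> 'a"
  assumes B0_lin: "linear (B 0)"
    and B0_sym: "\<And>u v. B 0 u \<bullet> v = u \<bullet> B 0 v"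
    and Bupd: "\<And>j. B (Suc j) = (\<lambda>v. ((1 - \<theta>) / (1 + \<theta>)) *\<^sub>R
                 (B j v + (1 / norm (s j) ^ 2) *\<^sub>R
                     ((s j \<bullet> v) *\<^sub>R resid gf x B s j + (resid gf x B s j \<bullet> v) *\<^sub>R s j)
                  - ((resid gf x B s j \<bullet> s j) / norm (s j) ^ 4 * (s j \<bullet> v)) *\<^sub>R s j))"
  shows "linear (B j) \<and> (\<forall>u v. B j u \<bullet> v = u \<bullet> B j v)"
proof (induction j)
  case 0
  then show ?case using B0_lin B0_sym by blast
next
  case (Suc j)
  then have lin: "linear (B j)" and sym: "\<And>u v. B j u \<bullet> v = u \<bullet> B j v" by blast+
  define r where "r = resid gf x B s j"
  define \<rho> where "\<rho> = (1 - \<theta>) / (1 + \<theta>)"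
  define c where "c = 1 / norm (s j) ^ 2"
  define \<kappa> where "\<kappa> = (r \<bullet> s j) / norm (s j) ^ 4"
  have BS: "B (Suc j) = (\<lambda>v. \<rho> *\<^sub>R (B j v + c *\<^sub>R ((s j \<bullet> v) *\<^sub>R r + (r \<bullet> v) *\<^sub>R s j) - (\<kappa> * (s j \<bullet> v)) *\<^sub>R s j))"
    unfolding Bupd r_def \<rho>_def c_def \<kappa>_def ..
  have "linear (B (Suc j))"
    unfolding BS by (rule lin_upd[OF lin])
  moreover have "\<forall>u v. B (Suc j) u \<bullet> v = u \<bullet> B (Suc j) v"
    unfolding BS using sym_upd[OF sym] by blast
  ultimately show ?case by blast
qed

lemma model_grad:
  fixes B :: "nat \<Rightarrow> 'a::euclidean_space \<Rightarrow> 'a"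
  assumes lin: "linear (B j)" and sym: "\<And>u v. B j u \<bullet> v = u \<bullet> B j v"
  shows "(model \<sigma> gf x B j has_derivative
           (\<lambda>h. (model_lin gf x j + B j s0 + (\<sigma> * norm s0 ^ 2) *\<^sub>R s0) \<bullet> h)) (at s0)"
proof -
  have eq: "model \<sigma> gf x B j = (\<lambda>s. model_lin gf x j \<bullet> s + 1/2 * (B j s \<bullet> s) + \<sigma> / 4 * (s \<bullet> s) ^ 2)"
    unfolding model_def by (rule ext) (simp add: power2_norm_eq_inner[symmetric] flip: power_mult)
  have dB: "(B j has_derivative B j) (at s0)" by (rule linear_imp_has_derivative[OF lin])
  have "((\<lambda>s. model_lin gf x j \<bullet> s + 1/2 * (B j s \<bullet> s) + \<sigma> / 4 * (s \<bullet> s) ^ 2) has_derivative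
         (\<lambda>h. model_lin gf x j \<bullet> h + 1/2 * (B j s0 \<bullet> h + B j h \<bullet> s0) + \<sigma> / 4 * (real 2 * (s0 \<bullet> s0) ^ (2 - 1) * (s0 \<bullet> h + h \<bullet> s0)))) (at s0)"
    by (intro derivative_eq_intros) (auto intro: dB simp: linear_imp_has_derivative[OF lin])
  moreover have "(\<lambda>h. model_lin gf x j \<bullet> h + 1/2 * (B j s0 \<bullet> h + B j h \<bullet> s0) + \<sigma> / 4 * (real 2 * (s0 \<bullet> s0) ^ (2 - 1) * (s0 \<bullet> h + h \<bullet> s0)))
     = (\<lambda>h. (model_lin gf x j + B j s0 + (\<sigma> * norm s0 ^ 2) *\<^sub>R s0) \<bullet> h)"
  proof (rule ext)
    fix h
    have sym2: "s0 \<bullet> B j h = h \<bullet> B j s0" by (metis sym inner_commute)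
    show "model_lin gf x j \<bullet> h + 1/2 * (B j s0 \<bullet> h + B j h \<bullet> s0) + \<sigma> / 4 * (real 2 * (s0 \<bullet> s0) ^ (2 - 1) * (s0 \<bullet> h + h \<bullet> s0))
      = (model_lin gf x j + B j s0 + (\<sigma> * norm s0 ^ 2) *\<^sub>R s0) \<bullet> h"
      by (simp add: sym sym2 inner_add_left inner_commute power2_norm_eq_inner algebra_simps)
  qed
  ultimately show ?thesis unfolding eq by simp
qed

lemma grad_eq:
  fixes G V :: "'a::real_inner"
  assumes "(F has_derivative (\<lambda>h. G \<bullet> h)) (at p)" "(F has_derivative (\<lambda>h. V \<bullet> h)) (at p)"
  shows "G = V"
proof -
  have "(\<lambda>h. G \<bullet> h) = (\<lambda>h. V \<bullet> h)" using has_derivative_unique[OF assms] .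
  then have "G \<bullet> (G - V) = V \<bullet> (G - V)" by meson
  then have "(G - V) \<bullet> (G - V) = 0" by (simp add: inner_diff_left)
  then show ?thesis by simp
qed

lemma Gv_suc:
  "real (Suc j + 1) *\<^sub>R gbar gf x (Suc j) = model_lin gf x j + gf (x (Suc j)) - gf (x j)"
proof -
  define S where "S = (\<Sum>i\<le>j. real (2 * i + 1) *\<^sub>R gf (x i))"
  have S': "(\<Sum>i<Suc j. real (2 * i + 1) *\<^sub>R gf (x i)) = S" unfolding S_def by (simp add: lessThan_Suc_atMost)
  have "real (Suc j + 1) *\<^sub>R gbar gf x (Suc j)
      = (real (Suc j + 1) * (1 / (real (Suc j) * real (Suc j + 1)))) *\<^sub>R (S + real (Suc j) *\<^sub>R gf (x (Suc j)))"
    unfolding gbar_def S' by simp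
  also have "real (Suc j + 1) * (1 / (real (Suc j) * real (Suc j + 1))) = 1 / real (j + 1)"
  proof -
    have "0 < real (Suc j + 1)" "0 < real (Suc j)" by simp_all
    then show ?thesis by (simp del: of_nat_Suc of_nat_add)
  qed
  also have "(1 / real (j + 1)) *\<^sub>R (S + real (Suc j) *\<^sub>R gf (x (Suc j))) = (1 / real (j + 1)) *\<^sub>R S + gf (x (Suc j))"
    by (simp add: scaleR_add_right)
  finally show ?thesis unfolding model_lin_def S_def by simp
qed

lemma pair_sum:
  "gf (x j) + gf (x (Suc j)) =
     real (Suc j + 1) *\<^sub>R gbar gf x (Suc j) - (real j / real (j + 1)) *\<^sub>R (real (j + 1) *\<^sub>R gbar gf x j)"
proof -
  define S where "S = (\<Sum>i<j. real (2 * i + 1) *\<^sub>R gf (x i))"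
  have old: "(real j / real (j + 1)) *\<^sub>R (real (j + 1) *\<^sub>R gbar gf x j) = (1 / real (j + 1)) *\<^sub>R (S + real j *\<^sub>R gf (x j))"
  proof (cases "j = 0")
    case True
    then show ?thesis unfolding S_def gbar_def by simp
  next
    case False
    have "(real j / real (j + 1)) *\<^sub>R (real (j + 1) *\<^sub>R gbar gf x j)
        = (real j / real (j + 1) * real (j + 1) * (1 / (real j * real (j + 1)))) *\<^sub>R (S + real j *\<^sub>R gf (x j))"
      unfolding gbar_def S_def by simp
    also have "real j / real (j + 1) * real (j + 1) * (1 / (real j * real (j + 1))) = 1 / real (j + 1)"
    proof -
      have "0 < real (j + 1)" "0 < real j" using False by simp_all
      then show ?thesis by (simp del: of_nat_Suc of_nat_add)
    qed
    finally show ?thesis .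
  qed
  have new: "real (Suc j + 1) *\<^sub>R gbar gf x (Suc j) = (1 / real (j + 1)) *\<^sub>R (S + real (2 * j + 1) *\<^sub>R gf (x j)) + gf (x (Suc j))"
  proof -
    have "(\<Sum>i\<le>j. real (2 * i + 1) *\<^sub>R gf (x i)) = S + real (2 * j + 1) *\<^sub>R gf (x j)"
      unfolding S_def by (simp add: lessThan_Suc_atMost[symmetric])
    then show ?thesis unfolding Gv_suc model_lin_def by simp
  qed
  have "(1 / real (j + 1)) *\<^sub>R (S + real (2 * j + 1) *\<^sub>R gf (x j)) - (1 / real (j + 1)) *\<^sub>R (S + real j *\<^sub>R gf (x j))
      = (1 / real (j + 1)) *\<^sub>R ((real (2 * j + 1) - real j) *\<^sub>R gf (x j))"
  proof -
    have "(S + real (2 * j + 1) *\<^sub>R gf (x j)) - (S + real j *\<^sub>R gf (x j)) = (real (2 * j + 1) - real j) *\<^sub>R gf (x j)"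
      by (simp only: scaleR_diff_left) simp
    then show ?thesis by (simp only: scaleR_diff_right[symmetric])
  qed
  also have "\<dots> = gf (x j)"
  proof -
    have "(1 / real (j + 1)) * (real (2 * j + 1) - real j) = 1" by (simp add: divide_simps)
    then show ?thesis by (simp only: scaleR_scaleR scaleR_one)
  qed
  finally show ?thesis unfolding new old by (simp add: algebra_simps)
qed

lemma sum_sq_bound:
  fixes t :: "nat \<Rightarrow> real"
  assumes k: "k \<ge> 1"
  shows "(\<Sum>i<k. t i ^ 2) ^ 2 / real k ^ 2 \<le> (\<Sum>i<k. t i ^ 4 / real (i + 1))"
proof -
  have cs: "(\<Sum>i<k. t i ^ 2) ^ 2 \<le> (\<Sum>i<k. (t i ^ 2) ^ 2) * real k"
    using sum_squared_le_sum_of_squares[of "\<lambda>i. t i ^ 2" "{..<k}"] by simp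
  have kp: "0 < real k" using k by simp
  have "(\<Sum>i<k. t i ^ 2) ^ 2 / real k ^ 2 \<le> (\<Sum>i<k. t i ^ 4) * real k / real k ^ 2"
    using cs kp by (simp add: divide_right_mono flip: power_mult)
  also have "\<dots> = (\<Sum>i<k. t i ^ 4 / real k)"
    using kp by (simp add: power2_eq_square sum_divide_distrib)
  also have "\<dots> \<le> (\<Sum>i<k. t i ^ 4 / real (i + 1))"
  proof (rule sum_mono)
    fix i assume "i \<in> {..<k}"
    then have "real (i + 1) \<le> real k" by simp
    moreover have "0 \<le> t i ^ 4" by (rule zero_le_even_power) simp
    ultimately show "t i ^ 4 / real k \<le> t i ^ 4 / real (i + 1)"
      by (simp add: divide_left_mono)
  qed
  finally show ?thesis .
qed

lemma sum_cube_bound: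
  fixes t :: "nat \<Rightarrow> real"
  assumes t0: "\<And>i. 0 \<le> t i"
  shows "(\<Sum>i<k. t i ^ 3) \<le> (\<Sum>i<k. t i ^ 2) powr (3/2)"
proof -
  define S where "S = (\<Sum>i<k. t i ^ 2)"
  have S0: "0 \<le> S" unfolding S_def by (simp add: sum_nonneg)
  have ti: "t i \<le> sqrt S" if "i < k" for i
  proof -
    have "t i ^ 2 \<le> S" unfolding S_def
      using that by (intro member_le_sum) auto
    then show ?thesis using t0[of i] by (simp add: real_le_rsqrt)
  qed
  have "(\<Sum>i<k. t i ^ 3) \<le> (\<Sum>i<k. sqrt S * t i ^ 2)"
  proof (rule sum_mono)
    fix i assume "i \<in> {..<k}"
    then have "t i * t i ^ 2 \<le> sqrt S * t i ^ 2" using ti by (intro mult_right_mono) auto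
    then show "t i ^ 3 \<le> sqrt S * t i ^ 2" by (simp add: power2_eq_square power3_eq_cube)
  qed
  also have "\<dots> = sqrt S * S" unfolding S_def by (simp add: sum_distrib_left)
  also have "\<dots> = S powr (3/2)"
  proof (cases "S = 0")
    case True then show ?thesis by simp
  next
    case False
    then have Sp: "0 < S" using S0 by simp
    have "S powr (3/2) = S powr (1 + 1/2)" by simp
    also have "\<dots> = S powr 1 * S powr (1/2)" by (rule powr_add)
    also have "\<dots> = S * S powr (1/2)" using Sp by simp
    also have "\<dots> = S * sqrt S" using Sp by (simp add: powr_half_sqrt)
    finally show ?thesis by simp
  qed
  finally show ?thesis unfolding S_def .
qed

theorem lemma4p3:
  fixes f :: "'a::euclidean_space \<Rightarrow> real"
    and gf :: "'a \<Rightarrow> 'a" and Hf :: "'a \<Rightarrow> 'a \<Rightarrow> 'a"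
    and M \<sigma> \<delta> \<theta> :: real
    and x s :: "nat \<Rightarrow> 'a" and B :: "nat \<Rightarrow> 'a \<Rightarrow> 'a"
    and k :: nat
  assumes grad: "\<And>y. (f has_derivative (\<lambda>h. gf y \<bullet> h)) (at y)"
    and hess: "\<And>y. (gf has_derivative Hf y) (at y)"
    and M_pos: "M > 0"
    and lip: "\<And>y z. onorm (\<lambda>v. Hf y v - Hf z v) \<le> M * norm (y - z)"
    and \<sigma>_pos: "\<sigma> > 0" and \<delta>_pos: "\<delta> > 0"
    and \<theta>: "0 < \<theta>" "\<theta> < 1"
    and B0_lin: "linear (B 0)"
    and B0_sym: "\<And>u v. B 0 u \<bullet> v = u \<bullet> B 0 v"
    and step: "\<And>j. \<exists>G. (model \<sigma> gf x B j has_derivative (\<lambda>h. G \<bullet> h)) (at (s j))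
                      \<and> norm G \<le> \<delta> * norm (s j)"
    and xs: "\<And>j. x (Suc j) = x j + s j"
    and Bupd: "\<And>j. B (Suc j) = (\<lambda>v. ((1 - \<theta>) / (1 + \<theta>)) *\<^sub>R
                 (B j v + (1 / norm (s j) ^ 2) *\<^sub>R
                     ((s j \<bullet> v) *\<^sub>R resid gf x B s j + (resid gf x B s j \<bullet> v) *\<^sub>R s j)
                  - ((resid gf x B s j \<bullet> s j) / norm (s j) ^ 4 * (s j \<bullet> v)) *\<^sub>R s j))"
    and k: "k \<ge> 1"
  shows "f (x k) - f (x 0) \<le>
           \<delta>^2 * real k / (2 * \<sigma>)
         - 3 / 8 * norm (real (k + 1) *\<^sub>R gbar gf x k) powr (4/3) / \<sigma> powr (1/3)
         - \<sigma> / (8 * real k ^ 2) * (Ssum s k) ^ 2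
         + M / 12 * Ssum s k powr (3/2)
         + 1 / (2 * \<sigma>) * (\<Sum>i<k. if s i = 0 then 0
                                   else norm (resid gf x B s i) ^ 2 / norm (s i) ^ 2)"
proof -
  define g where "g = (\<lambda>i. gf (x i))"
  define t where "t = (\<lambda>i. norm (s i))"
  define Gv where "Gv = (\<lambda>i. real (i + 1) *\<^sub>R gbar gf x i)"
  define \<Phi> where "\<Phi> = (\<lambda>i. 3/8 * norm (Gv i) powr (4/3) / \<sigma> powr (1/3))"
  define R where "R = (\<lambda>i. if s i = 0 then 0 else norm (resid gf x B s i) ^ 2 / norm (s i) ^ 2)"
  have perstep: "f (x (Suc j)) + \<Phi> (Suc j) - (f (x j) + \<Phi> j)
      \<le> \<delta>^2/(2*\<sigma>) + R j/(2*\<sigma>) - \<sigma> * (t j ^ 4 / real (j + 1)) / 8 + M/12 * t j ^ 3" for j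
  proof -
    have BP: "linear (B j)" "\<And>u v. B j u \<bullet> v = u \<bullet> B j v"
      using B_props[of B \<theta> s gf x, OF B0_lin B0_sym Bupd] by blast+
    obtain E where E1: "(model \<sigma> gf x B j has_derivative (\<lambda>h. E \<bullet> h)) (at (s j))"
      and E2: "norm E \<le> \<delta> * norm (s j)" using step[of j] by blast
    have Eeq: "E = model_lin gf x j + B j (s j) + (\<sigma> * norm (s j) ^ 2) *\<^sub>R s j"
      using grad_eq[OF E1 model_grad[of B j, OF BP]] .
    have GvS: "Gv (Suc j) = E + resid gf x B s j - (\<sigma> * norm (s j) ^ 2) *\<^sub>R s j"
      unfolding Gv_def Eeq resid_def using Gv_suc[of j gf x] by (simp add: algebra_simps)
    have rz: "resid gf x B s j = 0" if "s j = 0"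
      using that xs[of j] linear_0[OF BP(1)] unfolding resid_def by simp
    define a where "a = real j / real (j + 1)"
    have a0: "0 \<le> a" "a \<le> 1" unfolding a_def by auto
    have oma: "1 - a = 1 / real (j + 1)" unfolding a_def by (simp add: field_simps)
    have SI: "(Gv (Suc j) \<bullet> s j)/2 - a*(Gv j \<bullet> s j)/2 + \<Phi> (Suc j) - \<Phi> j
        \<le> \<delta>^2/(2*\<sigma>) + R j/(2*\<sigma>) - \<sigma>*(1-a)*norm (s j)^4/8"
      unfolding \<Phi>_def R_def
      using step_ineq[OF \<sigma>_pos less_imp_le[OF \<delta>_pos] a0 GvS E2 rz, of "Gv j"] by simp
    have TR: "f (x j + s j) - f (x j) \<le> ((gf (x j) + gf (x j + s j)) \<bullet> s j)/2 + M/12 * norm (s j) ^ 3"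
      by (rule trapezoid[OF grad hess lip])
    have PS: "(gf (x j) + gf (x j + s j)) \<bullet> s j = Gv (Suc j) \<bullet> s j - a * (Gv j \<bullet> s j)"
      using pair_sum[of gf x j] xs[of j] unfolding Gv_def a_def by (simp add: inner_diff_left)
    have eqq: "\<sigma>*(1-a)*norm (s j)^4/8 = \<sigma> * (t j ^ 4 / real (j + 1)) / 8"
      unfolding oma t_def by simp
    have TR': "f (x (Suc j)) - f (x j) \<le> (Gv (Suc j) \<bullet> s j - a * (Gv j \<bullet> s j))/2 + M/12 * norm (s j) ^ 3"
      using TR PS xs[of j] by simp
    have "(Gv (Suc j) \<bullet> s j - a * (Gv j \<bullet> s j))/2 = (Gv (Suc j) \<bullet> s j)/2 - a*(Gv j \<bullet> s j)/2"
      by (simp add: diff_divide_distrib)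
    then show ?thesis using SI TR' eqq unfolding t_def by linarith
  qed
  have "(\<Sum>j<k. f (x (Suc j)) + \<Phi> (Suc j) - (f (x j) + \<Phi> j))
      \<le> (\<Sum>j<k. \<delta>^2/(2*\<sigma>) + R j/(2*\<sigma>) - \<sigma> * (t j ^ 4 / real (j + 1)) / 8 + M/12 * t j ^ 3)"
    by (rule sum_mono) (rule perstep)
  also have "\<dots> = real k * (\<delta>^2/(2*\<sigma>)) + (\<Sum>j<k. R j)/(2*\<sigma>) - \<sigma> * (\<Sum>j<k. t j ^ 4 / real (j + 1)) / 8
      + M/12 * (\<Sum>j<k. t j ^ 3)"
    by (simp add: sum.distrib sum_subtractf sum_divide_distrib sum_distrib_left)
  finally have main: "f (x k) + \<Phi> k - (f (x 0) + \<Phi> 0) \<le> real k * (\<delta>^2/(2*\<sigma>)) + (\<Sum>j<k. R j)/(2*\<sigma>)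
      - \<sigma> * (\<Sum>j<k. t j ^ 4 / real (j + 1)) / 8 + M/12 * (\<Sum>j<k. t j ^ 3)"
    by (simp only: sum_lessThan_telescope[of "\<lambda>i. f (x i) + \<Phi> i"])
  have Phi0: "\<Phi> 0 = 0" unfolding \<Phi>_def Gv_def gbar_def by simp
  have Ssq: "Ssum s k ^ 2 / real k ^ 2 \<le> (\<Sum>j<k. t j ^ 4 / real (j + 1))"
    unfolding Ssum_def t_def using sum_sq_bound[OF k] .
  have Scube: "(\<Sum>j<k. t j ^ 3) \<le> Ssum s k powr (3/2)"
    unfolding Ssum_def t_def by (rule sum_cube_bound) simp
  have A1: "\<sigma> / (8 * real k ^ 2) * (Ssum s k) ^ 2 \<le> \<sigma> * (\<Sum>j<k. t j ^ 4 / real (j + 1)) / 8"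
  proof -
    have "\<sigma> / (8 * real k ^ 2) * (Ssum s k) ^ 2 = \<sigma> * (Ssum s k ^ 2 / real k ^ 2) / 8" by simp
    also have "\<dots> \<le> \<sigma> * (\<Sum>j<k. t j ^ 4 / real (j + 1)) / 8"
    proof -
      have "\<sigma> * (Ssum s k ^ 2 / real k ^ 2) \<le> \<sigma> * (\<Sum>j<k. t j ^ 4 / real (j + 1))"
        using Ssq \<sigma>_pos by (intro mult_left_mono) auto
      then show ?thesis by (rule divide_right_mono) simp
    qed
    finally show ?thesis .
  qed
  have A2: "M/12 * (\<Sum>j<k. t j ^ 3) \<le> M / 12 * Ssum s k powr (3/2)"
    using Scube M_pos by simp
  have A3: "(\<Sum>j<k. R j)/(2*\<sigma>) = 1 / (2 * \<sigma>) * (\<Sum>i<k. if s i = 0 then 0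
                                   else norm (resid gf x B s i) ^ 2 / norm (s i) ^ 2)"
    unfolding R_def by simp
  have A4: "\<Phi> k = 3 / 8 * norm (real (k + 1) *\<^sub>R gbar gf x k) powr (4/3) / \<sigma> powr (1/3)"
    unfolding \<Phi>_def Gv_def ..
  have A5: "real k * (\<delta>^2/(2*\<sigma>)) = \<delta>^2 * real k / (2 * \<sigma>)" by simp
  show ?thesis using main Phi0 A1 A2 A3 A4 A5 by linarith
qed

end
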